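(* Fix $a\ge0$, $x\ge0$, $\varepsilon>0$. Almost surely: (1) On $\{\tau_0^{(x),-}<T_a^{(x),+}\}$: $\inf\{t>0:R^{(x+\varepsilon)}(t)-R^{(x)}(t)<0\}\ge\tau_0^{(x),-}$. (2) On $\{\tau_0^{(x+\varepsilon),-}<T_a^{(x+\varepsilon),+}\}$: $L^{(x+\varepsilon)}(t)-L^{(x)}(t)=0$ for all $t\ge0$, and $R^{(x+\varepsilon)}(t)-R^{(x)}(t)=0$ for $t\in[0,\tau_0^{(x),-})$ while $R^{(x+\varepsilon)}(t)-R^{(x)}(t)=-\varepsilon$ for $t\in[\tau_0^{(x+\varepsilon),-},\infty)$. (3) On $\{T_a^{(x+\varepsilon),+}<\tau_0^{(x+\varepsilon),-}\}$: $\inf\{t>0:L^{(x+\varepsilon)}(t)-L^{(x)}(t)>0\}\ge T_a^{(x+\varepsilon),+}$. (4) On $\{T_a^{(x),+}<\tau_0^{(x),-}\}$: $L^{(x+\varepsilon)}(t)-L^{(x)}(t)=0$ for $t\in[0,T_a^{(x+\varepsilon),+})$ and $=\varepsilon$ for $t\in[T_a^{(x),+},\infty)$, and $R^{(x+\varepsilon)}(t)-R^{(x)}(t)=0$ for all $t\ge0$.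
   Context: $X$ is a real-valued Lévy process with $X(0)=0$ under $\mathbb{P}$; $N_r$ is an independent Poisson process of rate $r>0$ with arrival times $0<T_1<T_2<\cdots$, $T_0:=0$. For $y\ge0$ let $X^{(y)}:=X+y$, $T_a^{(y),+}:=\inf\{T_k:k\ge1,\ X^{(y)}(T_k)>a\}$ and $\tau_0^{(y),-}:=\inf\{t\ge0:X^{(y)}(t)<0\}$. Given $a\ge0$, $(U^{(y)},L^{(y)},R^{(y)})$ is the periodic-classical barrier strategy at $a$ driven by $X^{(y)}$: $U^{(y)}=X^{(y)}-L^{(y)}+R^{(y)}$; $L^{(y)}(0)=0$ and $L^{(y)}$ is constant on each $[T_k,T_{k+1})$; on $[T_k,T_{k+1})$, with $Y(t):=U^{(y)}(T_k)+X(t)-X(T_k)$ (where $U^{(y)}(T_0):=y$), $R^{(y)}(t)=R^{(y)}(T_k)+\max\{0,\sup_{s\in[T_k,t]}(-Y(s))\}$ (with $R^{(y)}(T_0):=0$) and $U^{(y)}(t)=Y(t)+R^{(y)}(t)-R^{(y)}(T_k)$; at $T_{k+1}$, $L^{(y)}$ jumps by $(U^{(y)}(T_{k+1}-)-a)^+$ and $U^{(y)}(T_{k+1})=\min\{U^{(y)}(T_{k+1}-),a\}$. *)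

theory Defs
  imports "HOL-Probability.Probability"
begin

definition cadlag :: "(real \<Rightarrow> real) \<Rightarrow> bool" where
  "cadlag f \<longleftrightarrow> (\<forall>t\<ge>0. continuous (at_right t) f) \<and>
                  (\<forall>t>0. \<exists>l. (f \<longlongrightarrow> l) (at_left t))"

definition levy_process :: "'a measure \<Rightarrow> (real \<Rightarrow> 'a \<Rightarrow> real) \<Rightarrow> bool" where
  "levy_process M X \<longleftrightarrow> prob_space M \<and>
     (\<forall>t. X t \<in> borel_measurable M) \<and>
     (AE \<omega> in M. X 0 \<omega> = 0) \<and>
     (AE \<omega> in M. cadlag (\<lambda>t. X t \<omega>)) \<and>
     (\<forall>(ts::nat \<Rightarrow> real) n. ts 0 \<ge> 0 \<and> strict_mono ts \<longrightarrow>
        prob_space.indep_vars M (\<lambda>_. borel) (\<lambda>i \<omega>. X (ts (Suc i)) \<omega> - X (ts i) \<omega>) {..<n}) \<and>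
     (\<forall>s\<ge>0. \<forall>t\<ge>0. distr M borel (\<lambda>\<omega>. X (s + t) \<omega> - X s \<omega>) = distr M borel (\<lambda>\<omega>. X t \<omega> - X 0 \<omega>))"

definition poisson_arrivals :: "'a measure \<Rightarrow> real \<Rightarrow> (nat \<Rightarrow> 'a \<Rightarrow> real) \<Rightarrow> bool" where
  "poisson_arrivals M r T \<longleftrightarrow> prob_space M \<and>
     (\<forall>\<omega>\<in>space M. T 0 \<omega> = 0) \<and>
     (\<forall>k. T k \<in> borel_measurable M) \<and>
     prob_space.indep_vars M (\<lambda>_. borel) (\<lambda>k \<omega>. T (Suc k) \<omega> - T k \<omega>) UNIV \<and>
     (\<forall>k. distributed M lborel (\<lambda>\<omega>. T (Suc k) \<omega> - T k \<omega>) (exponential_density r))"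

definition indep_processes :: "'a measure \<Rightarrow> (real \<Rightarrow> 'a \<Rightarrow> real) \<Rightarrow> (nat \<Rightarrow> 'a \<Rightarrow> real) \<Rightarrow> bool" where
  "indep_processes M X T \<longleftrightarrow> prob_space.indep_set M
     (sigma_sets (space M) {X t -` B \<inter> space M | t B. B \<in> sets borel})
     (sigma_sets (space M) {T k -` B \<inter> space M | k B. B \<in> sets borel})"

text \<open>On [T k, T (Suc k)) starting from U(T k) = u.\<close>
definition pc_Uint :: "(real \<Rightarrow> real) \<Rightarrow> (nat \<Rightarrow> real) \<Rightarrow> real \<Rightarrow> nat \<Rightarrow> real \<Rightarrow> real" where
  "pc_Uint X T u k t = u + X t - X (T k)
      + max 0 (SUP s\<in>{T k..t}. - (u + X s - X (T k)))"

text \<open>(U(T k), L(T k)).\<close>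
fun pc_state :: "(real \<Rightarrow> real) \<Rightarrow> (nat \<Rightarrow> real) \<Rightarrow> real \<Rightarrow> real \<Rightarrow> nat \<Rightarrow> real \<times> real" where
  "pc_state X T a y 0 = (y, 0)"
| "pc_state X T a y (Suc k) =
     (let (u, l) = pc_state X T a y k;
          um = Lim (at_left (T (Suc k))) (pc_Uint X T u k)
      in (min um a, l + max (um - a) 0))"

definition pc_idx :: "(nat \<Rightarrow> real) \<Rightarrow> real \<Rightarrow> nat" where
  "pc_idx T t = (GREATEST k. T k \<le> t)"

definition pc_U :: "(real \<Rightarrow> real) \<Rightarrow> (nat \<Rightarrow> real) \<Rightarrow> real \<Rightarrow> real \<Rightarrow> real \<Rightarrow> real" where
  "pc_U X T a y t = pc_Uint X T (fst (pc_state X T a y (pc_idx T t))) (pc_idx T t) t"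

definition pc_L :: "(real \<Rightarrow> real) \<Rightarrow> (nat \<Rightarrow> real) \<Rightarrow> real \<Rightarrow> real \<Rightarrow> real \<Rightarrow> real" where
  "pc_L X T a y t = snd (pc_state X T a y (pc_idx T t))"

text \<open>R is determined by U = X^(y) - L + R.\<close>
definition pc_R :: "(real \<Rightarrow> real) \<Rightarrow> (nat \<Rightarrow> real) \<Rightarrow> real \<Rightarrow> real \<Rightarrow> real \<Rightarrow> real" where
  "pc_R X T a y t = pc_U X T a y t - (X t + y) + pc_L X T a y t"

section \<open>Hitting times (extended reals, inf of empty set = \<infinity>)\<close>

definition tau0 :: "(real \<Rightarrow> real) \<Rightarrow> real \<Rightarrow> ereal" where
  "tau0 X y = Inf {ereal t | t. t \<ge> 0 \<and> X t + y < 0}"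

definition Tplus :: "(real \<Rightarrow> real) \<Rightarrow> (nat \<Rightarrow> real) \<Rightarrow> real \<Rightarrow> real \<Rightarrow> ereal" where
  "Tplus X T a y = Inf {ereal (T k) | k. k \<ge> 1 \<and> X (T k) + y > a}"

definition first_time :: "(real \<Rightarrow> bool) \<Rightarrow> ereal" where
  "first_time P = Inf {ereal t | t. t > 0 \<and> P t}"

end

theory Submission
  imports Defs
begin

lemma cadlag_bounded:
  fixes f :: "real \<Rightarrow> real"
  assumes c: "cadlag f" and a0: "0 \<le> \<alpha>"
  shows "\<exists>B. \<forall>s\<in>{\<alpha>..\<beta>}. \<bar>f s\<bar> \<le> B"
proof -
  have loc: "\<exists>d>0. \<exists>B. \<forall>s. 0 \<le> s \<and> \<bar>s - p\<bar> < d \<longrightarrow> \<bar>f s\<bar> \<le> B" if p: "p \<ge> 0" for p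
  proof -
    have "(f \<longlongrightarrow> f p) (at_right p)" using c p unfolding cadlag_def continuous_within by auto
    then have "eventually (\<lambda>s. dist (f s) (f p) < 1) (at_right p)"
      by (simp add: tendstoD)
    then obtain b1 where b1: "b1 > p" "\<And>s. p < s \<Longrightarrow> s < b1 \<Longrightarrow> dist (f s) (f p) < 1"
      unfolding eventually_at_right_field by blast
    show ?thesis
    proof (cases "p = 0")
      case True
      show ?thesis
        apply (rule exI[of _ "b1 - p"])
        apply (intro conjI)
        using b1 apply simp
        apply (rule exI[of _ "\<bar>f p\<bar> + 1"])
        using b1 True apply (auto simp: dist_real_def)
        by (smt (verit, best))
    next
      case False
      with p have "p > 0" by simp
      then obtain l where "(f \<longlongrightarrow> l) (at_left p)" using c unfolding cadlag_def by auto
      then have "eventually (\<lambda>s. dist (f s) l < 1) (at_left p)"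
        by (simp add: tendstoD)
      then obtain b2 where b2: "b2 < p" "\<And>s. b2 < s \<Longrightarrow> s < p \<Longrightarrow> dist (f s) l < 1"
        unfolding eventually_at_left_field by blast
      show ?thesis
        apply (rule exI[of _ "min (b1 - p) (p - b2)"])
        apply (intro conjI)
        using b1 b2 apply simp
        apply (rule exI[of _ "\<bar>f p\<bar> + \<bar>l\<bar> + 1"])
      proof (intro allI impI)
        fix s assume s: "0 \<le> s \<and> \<bar>s - p\<bar> < min (b1 - p) (p - b2)"
        consider "s < p" | "s = p" | "s > p" by linarith
        then show "\<bar>f s\<bar> \<le> \<bar>f p\<bar> + \<bar>l\<bar> + 1"
        proof cases
          case 1
          then have "dist (f s) l < 1" using s b2 by (intro b2(2)) auto
          then show ?thesis by (auto simp: dist_real_def)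
        next
          case 3
          then have "dist (f s) (f p) < 1" using s b1 by (intro b1(2)) auto
          then show ?thesis by (auto simp: dist_real_def)
        qed simp
      qed
    qed
  qed
  then obtain d B where dB: "\<And>p. p \<ge> 0 \<Longrightarrow> d p > 0 \<and> (\<forall>s. 0 \<le> s \<and> \<bar>s - p\<bar> < d p \<longrightarrow> \<bar>f s\<bar> \<le> B p)"
    by metis
  have cov: "{\<alpha>..\<beta>} \<subseteq> (\<Union>p\<in>{\<alpha>..\<beta>}. ball p (d p))"
  proof
    fix s assume "s \<in> {\<alpha>..\<beta>}"
    then show "s \<in> (\<Union>p\<in>{\<alpha>..\<beta>}. ball p (d p))" using dB[of s] a0 by (auto intro!: bexI[of _ s])
  qed
  obtain F where F: "F \<subseteq> {\<alpha>..\<beta>}" "finite F" "{\<alpha>..\<beta>} \<subseteq> (\<Union>p\<in>F. ball p (d p))"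
    using compactE_image[of "{\<alpha>..\<beta>}" "{\<alpha>..\<beta>}" "\<lambda>p. ball p (d p)"] cov by auto
  show ?thesis
  proof (rule exI[of _ "\<Sum>p\<in>F. \<bar>B p\<bar>"], intro ballI)
    fix s assume s: "s \<in> {\<alpha>..\<beta>}"
    then obtain p where p: "p \<in> F" "s \<in> ball p (d p)" using F by auto
    have "p \<ge> 0" using p F a0 by auto
    then have "\<bar>f s\<bar> \<le> B p" using dB[of p] p s a0 by (auto simp: dist_real_def abs_minus_commute)
    also have "\<dots> \<le> \<bar>B p\<bar>" by simp
    also have "\<dots> \<le> (\<Sum>p\<in>F. \<bar>B p\<bar>)" using p F by (intro member_le_sum) auto
    finally show "\<bar>f s\<bar> \<le> (\<Sum>p\<in>F. \<bar>B p\<bar>)" .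
  qed
qed

definition Gs :: "(real \<Rightarrow> real) \<Rightarrow> real \<Rightarrow> real \<Rightarrow> real" where
  "Gs X \<alpha> t = (SUP s\<in>{\<alpha>..t}. - X s)"

locale gpath =
  fixes X :: "real \<Rightarrow> real" and T :: "nat \<Rightarrow> real"
  assumes X0: "X 0 = 0" and cad: "cadlag X" and T0: "T 0 = 0" and Tmono: "strict_mono T"
    and Tunb: "\<forall>t. \<exists>k. t < T k" and Xlc: "\<forall>k\<ge>1. (X \<longlongrightarrow> X (T k)) (at_left (T k))"
begin

lemma bddX: "0 \<le> \<alpha> \<Longrightarrow> \<exists>B. \<forall>s\<in>{\<alpha>..t}. \<bar>X s\<bar> \<le> B"
  using cadlag_bounded[OF cad] by blast

lemma bddG: assumes "0 \<le> \<alpha>" shows "bdd_above ((\<lambda>s. c - X s) ` {\<alpha>..t})"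
proof -
  obtain B where B: "\<forall>s\<in>{\<alpha>..t}. \<bar>X s\<bar> \<le> B" using bddX[OF assms] by blast
  show ?thesis by (rule bdd_aboveI2[of _ _ "c + B"]) (use B in force)
qed

lemma G_upper: "0 \<le> \<alpha> \<Longrightarrow> \<alpha> \<le> s \<Longrightarrow> s \<le> t \<Longrightarrow> - X s \<le> Gs X \<alpha> t"
  unfolding Gs_def using bddG[of \<alpha> 0 t] by (intro cSUP_upper2[of _ _ s]) auto

lemma G_le_iff: "0 \<le> \<alpha> \<Longrightarrow> \<alpha> \<le> t \<Longrightarrow> Gs X \<alpha> t \<le> c \<longleftrightarrow> (\<forall>s\<in>{\<alpha>..t}. - X s \<le> c)"
  unfolding Gs_def using bddG[of \<alpha> 0 t] by (subst cSUP_le_iff) auto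

lemma G_ge: "0 \<le> \<alpha> \<Longrightarrow> \<alpha> \<le> t \<Longrightarrow> - X \<alpha> \<le> Gs X \<alpha> t"
  using G_upper by auto

lemma G_split: assumes "0 \<le> \<alpha>" "\<alpha> \<le> \<beta>" "\<beta> \<le> t"
  shows "Gs X \<alpha> t = max (Gs X \<alpha> \<beta>) (Gs X \<beta> t)"
proof (rule antisym)
  show "Gs X \<alpha> t \<le> max (Gs X \<alpha> \<beta>) (Gs X \<beta> t)"
  proof (subst G_le_iff, (use assms in auto)[2], intro ballI)
    fix s assume s: "s \<in> {\<alpha>..t}"
    show "- X s \<le> max (Gs X \<alpha> \<beta>) (Gs X \<beta> t)"
    proof (cases "s \<le> \<beta>")
      case True then show ?thesis using G_upper[of \<alpha> s \<beta>] s assms by auto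
    next
      case False then show ?thesis using G_upper[of \<beta> s t] s assms by auto
    qed
  qed
  have "Gs X \<alpha> \<beta> \<le> Gs X \<alpha> t"
    using assms by (subst G_le_iff) (auto intro!: G_upper)
  moreover have "Gs X \<beta> t \<le> Gs X \<alpha> t"
    using assms by (subst G_le_iff) (auto intro!: G_upper)
  ultimately show "max (Gs X \<alpha> \<beta>) (Gs X \<beta> t) \<le> Gs X \<alpha> t" by simp
qed

lemma G_mono: "0 \<le> \<alpha> \<Longrightarrow> \<alpha> \<le> t \<Longrightarrow> t \<le> t' \<Longrightarrow> Gs X \<alpha> t \<le> Gs X \<alpha> t'"
  by (subst G_le_iff) (auto intro!: G_upper)

lemma Uint_eq:
  assumes "0 \<le> T k" "T k \<le> t"
  shows "pc_Uint X T u k t = X t + max (u - X (T k)) (Gs X (T k) t)"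
proof -
  have e: "(SUP s\<in>{T k..t}. - (u + X s - X (T k))) = Gs X (T k) t - u + X (T k)"
  proof (rule antisym)
    show "(SUP s\<in>{T k..t}. - (u + X s - X (T k))) \<le> Gs X (T k) t - u + X (T k)"
      using assms by (intro cSUP_least) (auto dest: G_upper[of "T k" _ t])
    have b: "bdd_above ((\<lambda>s. - (u + X s - X (T k))) ` {T k..t})"
      using bddG[of "T k" "X (T k) - u" t] assms by (simp add: algebra_simps)
    have "Gs X (T k) t \<le> (SUP s\<in>{T k..t}. - (u + X s - X (T k))) + u - X (T k)"
    proof (subst G_le_iff, (use assms in auto)[2], intro ballI)
      fix s assume s: "s \<in> {T k..t}"
      have "- (u + X s - X (T k)) \<le> (SUP s\<in>{T k..t}. - (u + X s - X (T k)))"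
        by (rule cSUP_upper[OF s b])
      then show "- X s \<le> (SUP s\<in>{T k..t}. - (u + X s - X (T k))) + u - X (T k)" by simp
    qed
    then show "Gs X (T k) t - u + X (T k) \<le> (SUP s\<in>{T k..t}. - (u + X s - X (T k)))" by simp
  qed
  show ?thesis unfolding pc_Uint_def e by (simp add: max_def)
qed

lemma G_left_lim:
  assumes a0: "0 \<le> \<alpha>" and ab: "\<alpha> < b" and lc: "(X \<longlongrightarrow> X b) (at_left b)"
  shows "((\<lambda>t. Gs X \<alpha> t) \<longlongrightarrow> Gs X \<alpha> b) (at_left b)"
proof (rule order_tendstoI)
  fix y assume y: "y < Gs X \<alpha> b"
  then have "\<exists>s\<in>{\<alpha>..b}. y < - X s"
    using G_le_iff[OF a0, of b y] ab by (auto simp: not_le)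
  then obtain s where s: "s \<in> {\<alpha>..b}" "y < - X s" by blast
  show "\<forall>\<^sub>F t in at_left b. y < Gs X \<alpha> t"
  proof (cases "s < b")
    case True
    show ?thesis
    proof (rule eventually_at_leftI[of s])
      fix t assume "t \<in> {s<..<b}"
      then show "y < Gs X \<alpha> t" using G_upper[OF a0, of s t] s by auto
    qed fact
  next
    case False
    then have sb: "s = b" using s by auto
    have "((\<lambda>t. - X t) \<longlongrightarrow> - X b) (at_left b)" using lc by (intro tendsto_minus)
    then have "\<forall>\<^sub>F t in at_left b. y < - X t" using s sb by (intro order_tendstoD) auto
    moreover have "\<forall>\<^sub>F t in at_left b. t \<in> {\<alpha><..<b}" using ab by (rule eventually_at_left_real)
    ultimately show ?thesis
    proof eventually_elim
      case (elim t)
      then show ?case using G_upper[OF a0, of t t] by auto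
    qed
  qed
next
  fix y assume y: "Gs X \<alpha> b < y"
  have "\<forall>\<^sub>F t in at_left b. t \<in> {\<alpha><..<b}" using ab by (rule eventually_at_left_real)
  then show "\<forall>\<^sub>F t in at_left b. Gs X \<alpha> t < y"
  proof eventually_elim
    case (elim t)
    then show ?case using G_mono[OF a0, of t b] y by auto
  qed
qed

lemma T_less: "j < k \<Longrightarrow> T j < T k" using Tmono by (simp add: strict_mono_less)
lemma T_le: "j \<le> k \<Longrightarrow> T j \<le> T k" using Tmono by (simp add: strict_mono_less_eq)
lemma T_ge0: "0 \<le> T k" using T_le[of 0 k] T0 by simp
lemma T_le_iff: "T j \<le> T k \<longleftrightarrow> j \<le> k" using Tmono by (simp add: strict_mono_less_eq)
lemma T_less_iff: "T j < T k \<longleftrightarrow> j < k" using Tmono by (simp add: strict_mono_less)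

lemma idx_eq: assumes "T k \<le> t" "t < T (Suc k)" shows "pc_idx T t = k"
  unfolding pc_idx_def
proof (rule Greatest_equality)
  show "T k \<le> t" by fact
  fix j assume "T j \<le> t"
  with assms have "T j < T (Suc k)" by simp
  then show "j \<le> k" by (simp add: T_less_iff)
qed

lemma idx_ex: assumes "0 \<le> t" shows "\<exists>k. T k \<le> t \<and> t < T (Suc k)"
proof -
  obtain m where m: "t < T m" using Tunb by blast
  define n where "n = (LEAST n. t < T n)"
  have n1: "t < T n" unfolding n_def by (rule LeastI[of _ m]) (rule m)
  have n0: "n \<noteq> 0"
  proof
    assume "n = 0" then show False using n1 T0 assms by simp
  qed
  then obtain k where k: "n = Suc k" by (cases n) auto
  have "\<not> t < T k" using not_less_Least[of k "\<lambda>n. t < T n"] k unfolding n_def by auto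
  then show ?thesis using n1 k by (auto simp: not_less)
qed

lemma Uint_lim:
  "Lim (at_left (T (Suc k))) (pc_Uint X T u k) = X (T (Suc k)) + max (u - X (T k)) (Gs X (T k) (T (Suc k)))"
proof (rule tendsto_Lim)
  have lt: "T k < T (Suc k)" by (simp add: T_less_iff)
  have lc: "(X \<longlongrightarrow> X (T (Suc k))) (at_left (T (Suc k)))" using Xlc by auto
  have ev: "\<forall>\<^sub>F t in at_left (T (Suc k)). X t + max (u - X (T k)) (Gs X (T k) t) = pc_Uint X T u k t"
    using eventually_at_left_real[OF lt] by eventually_elim (simp add: Uint_eq T_ge0)
  show "(pc_Uint X T u k \<longlongrightarrow> X (T (Suc k)) + max (u - X (T k)) (Gs X (T k) (T (Suc k)))) (at_left (T (Suc k)))"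
    by (rule Lim_transform_eventually[OF _ ev])
       (intro tendsto_intros lc G_left_lim[OF T_ge0 lt lc])
qed simp

definition Vf :: "real \<Rightarrow> nat \<Rightarrow> real" where
  "Vf u k = X (T (Suc k)) + max (u - X (T k)) (Gs X (T k) (T (Suc k)))"

lemma st_Suc: "pc_state X T a y (Suc k) =
   (min (Vf (fst (pc_state X T a y k)) k) a, snd (pc_state X T a y k) + max (Vf (fst (pc_state X T a y k)) k - a) 0)"
  by (simp add: Uint_lim Vf_def Let_def split: prod.splits)

declare pc_state.simps(2)[simp del]

lemma Vf_mono: "u \<le> u' \<Longrightarrow> Vf u k \<le> Vf u' k"
  unfolding Vf_def by simp

lemma pc_at:
  assumes "T k \<le> t" "t < T (Suc k)"
  shows "pc_U X T a y t = X t + max (fst (pc_state X T a y k) - X (T k)) (Gs X (T k) t)"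
    and "pc_L X T a y t = snd (pc_state X T a y k)"
    and "pc_R X T a y t = max (fst (pc_state X T a y k) - X (T k)) (Gs X (T k) t) - y + snd (pc_state X T a y k)"
  using assms by (simp_all add: pc_U_def pc_L_def pc_R_def idx_eq Uint_eq T_ge0)

lemma l_nonneg: "snd (pc_state X T a y k) \<ge> 0"
  by (induction k) (auto simp: st_Suc)

lemma c_nonneg: "fst (pc_state X T a y k) + snd (pc_state X T a y k) - X (T k) - y \<ge> 0"
proof (induction k)
  case 0 then show ?case by (simp add: X0 T0)
next
  case (Suc k)
  then show ?case by (simp add: st_Suc Vf_def)
qed

lemma u_mono: "y \<le> y' \<Longrightarrow> fst (pc_state X T a y k) \<le> fst (pc_state X T a y' k)"
proof (induction k)
  case (Suc k)
  then show ?case using Vf_mono[OF Suc.IH[OF Suc.prems], of k] by (simp add: st_Suc)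
qed simp

lemma coincide:
  assumes "fst (pc_state X T a y k) = fst (pc_state X T a y' k)" "k \<le> j"
  shows "fst (pc_state X T a y j) = fst (pc_state X T a y' j) \<and>
         snd (pc_state X T a y j) - snd (pc_state X T a y' j) = snd (pc_state X T a y k) - snd (pc_state X T a y' k)"
  using assms(2)
proof (induction j rule: dec_induct)
  case base then show ?case using assms(1) by simp
next
  case (step j)
  then show ?case by (simp add: st_Suc)
qed

definition W :: "real \<Rightarrow> real \<Rightarrow> real" where
  "W y t = X t + max y (Gs X 0 t)"

lemma G00: "Gs X 0 0 = 0"
  using G_le_iff[of 0 0 0] G_ge[of 0 0] X0 by auto

lemma PR:
  assumes y0: "0 \<le> y" and noreset: "\<forall>j\<in>{1..k}. W y (T j) \<le> a"
  shows "pc_state X T a y k = (W y (T k), 0)"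
  using noreset
proof (induction k)
  case 0 then show ?case using y0 by (simp add: W_def G00 X0 T0)
next
  case (Suc k)
  then have IH: "pc_state X T a y k = (W y (T k), 0)" by auto
  have V: "Vf (W y (T k)) k = W y (T (Suc k))"
    unfolding Vf_def W_def using G_split[of 0 "T k" "T (Suc k)"] T_ge0 T_le[of k "Suc k"]
    by (simp add: max.assoc)
  have "W y (T (Suc k)) \<le> a" using Suc.prems by auto
  then show ?case by (simp add: st_Suc IH V)
qed

lemma first_reset:
  assumes y0: "0 \<le> y" and k1: "1 \<le> k" and noreset: "\<forall>j\<in>{1..<k}. W y (T j) \<le> a"
    and r: "W y (T k) > a"
  shows "pc_state X T a y k = (a, W y (T k) - a)"
proof -
  obtain k' where k': "k = Suc k'" using k1 by (cases k) auto
  have IH: "pc_state X T a y k' = (W y (T k'), 0)" using noreset k' by (intro PR[OF y0]) auto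
  have V: "Vf (W y (T k')) k' = W y (T k)"
    unfolding Vf_def W_def k' using G_split[of 0 "T k'" "T (Suc k')"] T_ge0 T_le[of k' "Suc k'"]
    by (simp add: max.assoc)
  show ?thesis using r by (simp add: k' st_Suc IH V[unfolded k'])
qed

lemma pre_U:
  assumes "T k \<le> t"
  shows "max (W y (T k) - X (T k)) (Gs X (T k) t) = max y (Gs X 0 t)"
  unfolding W_def using G_split[of 0 "T k" t] T_ge0 assms by (simp add: max.assoc)

lemma fst_le_a: "1 \<le> k \<Longrightarrow> fst (pc_state X T a y k) \<le> a"
  by (cases k) (auto simp: st_Suc)

lemma tau0_pos: assumes "ereal t < tau0 X y" "s \<le> t" "0 \<le> s" shows "0 \<le> X s + y"
proof (rule ccontr)
  assume "\<not> 0 \<le> X s + y"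
  then have "tau0 X y \<le> ereal s" unfolding tau0_def using assms(3) by (intro Inf_lower) auto
  then have "tau0 X y \<le> ereal t" using assms(2) by (meson ereal_less_eq(3) order_trans)
  with assms(1) show False by simp
qed

lemma G_le_tau: assumes "0 \<le> t" "ereal t < tau0 X y" shows "Gs X 0 t \<le> y"
proof -
  have "\<forall>s\<in>{0..t}. - X s \<le> y" using tau0_pos[OF assms(2)] by force
  then show ?thesis using G_le_iff[of 0 t y] assms(1) by auto
qed

lemma tau_G: assumes t0: "0 \<le> t" and le: "tau0 X y \<le> ereal t" shows "y \<le> Gs X 0 t"
proof (rule ccontr)
  assume "\<not> y \<le> Gs X 0 t"
  then have g: "Gs X 0 t < y" by simp
  have pos: "0 < X s + y" if "0 \<le> s" "s \<le> t" for s using G_upper[of 0 s t] that g by auto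
  have "(X \<longlongrightarrow> X t) (at_right t)" using cad t0 unfolding cadlag_def continuous_within by auto
  moreover have "X t + y > 0" using pos[of t] t0 by auto
  ultimately have "\<forall>\<^sub>F s in at_right t. - y < X s" by (intro order_tendstoD) auto
  then obtain b where b: "b > t" "\<And>s. t < s \<Longrightarrow> s < b \<Longrightarrow> - y < X s"
    unfolding eventually_at_right_field by blast
  have "ereal b \<le> tau0 X y" unfolding tau0_def
  proof (rule Inf_greatest, clarsimp)
    fix s assume s: "0 \<le> s" "X s + y < 0"
    show "b \<le> s"
    proof (rule ccontr)
      assume "\<not> b \<le> s"
      then show False using s pos[of s] b(2)[of s] by (cases "s \<le> t") auto
    qed
  qed
  then have "ereal b \<le> ereal t" using le by (rule order_trans)
  then show False using b(1) by simp
qed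

lemma Tplus_lt: assumes "1 \<le> k" "ereal (T k) < Tplus X T a y" shows "X (T k) + y \<le> a"
proof (rule ccontr)
  assume "\<not> X (T k) + y \<le> a"
  then have "Tplus X T a y \<le> ereal (T k)" unfolding Tplus_def using assms(1) by (intro Inf_lower) auto
  then show False using assms by auto
qed

lemma tau0_mono: "0 \<le> e \<Longrightarrow> tau0 X y \<le> tau0 X (y + e)"
  unfolding tau0_def by (rule Inf_superset_mono) auto

lemma Tplus_anti: "0 \<le> e \<Longrightarrow> Tplus X T a (y + e) \<le> Tplus X T a y"
  unfolding Tplus_def by (rule Inf_superset_mono) auto

lemma Tplus_att:
  assumes "Tplus X T a y < \<infinity>"
  shows "\<exists>J. 1 \<le> J \<and> Tplus X T a y = ereal (T J) \<and> a < X (T J) + y \<and> (\<forall>j. 1 \<le> j \<longrightarrow> j < J \<longrightarrow> X (T j) + y \<le> a)"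
proof -
  have "\<exists>k. 1 \<le> k \<and> a < X (T k) + y"
  proof (rule ccontr)
    assume "\<not> ?thesis"
    then have E: "{ereal (T k) | k. k \<ge> 1 \<and> X (T k) + y > a} = {}" by auto
    show False using assms unfolding Tplus_def E by (simp add: top_ereal_def)
  qed
  then obtain k0 where k0: "1 \<le> k0 \<and> a < X (T k0) + y" by blast
  define J where "J = (LEAST k. 1 \<le> k \<and> a < X (T k) + y)"
  have J: "1 \<le> J \<and> a < X (T J) + y" unfolding J_def by (rule LeastI[of _ k0]) (rule k0)
  have Jmin: "J \<le> k" if "1 \<le> k \<and> a < X (T k) + y" for k unfolding J_def by (rule Least_le) (rule that)
  have "Tplus X T a y = ereal (T J)"
  proof (rule antisym)
    show "Tplus X T a y \<le> ereal (T J)" unfolding Tplus_def using J by (intro Inf_lower) auto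
    show "ereal (T J) \<le> Tplus X T a y" unfolding Tplus_def
      by (rule Inf_greatest) (auto intro!: T_le Jmin)
  qed
  moreover have "\<forall>j. 1 \<le> j \<longrightarrow> j < J \<longrightarrow> X (T j) + y \<le> a"
    using Jmin by force
  ultimately show ?thesis using J by blast
qed

lemma W_eq: "0 \<le> t \<Longrightarrow> ereal t < tau0 X y \<Longrightarrow> W y t = X t + y"
  unfolding W_def using G_le_tau[of t y] by (simp add: max_def)

lemma noreset:
  assumes "ereal t < tau0 X y" "ereal t < Tplus X T a y" "T k \<le> t"
  shows "\<forall>j\<in>{1..k}. W y (T j) \<le> a"
proof
  fix j assume j: "j \<in> {1..k}"
  have tj: "T j \<le> t" using assms(3) T_le[of j k] j by auto
  have "ereal (T j) < tau0 X y" using assms(1) tj by (meson ereal_less_eq(3) le_less_trans)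
  then have "W y (T j) = X (T j) + y" by (intro W_eq T_ge0)
  also have "\<dots> \<le> a" using j tj assms(2) by (intro Tplus_lt) (auto, meson ereal_less_eq(3) le_less_trans)
  finally show "W y (T j) \<le> a" .
qed

lemma pre_vals:
  assumes "pc_state X T a y k = (W y (T k), 0)" "T k \<le> t" "t < T (Suc k)"
  shows "pc_L X T a y t = 0" "pc_U X T a y t = X t + max y (Gs X 0 t)"
    "pc_R X T a y t = max y (Gs X 0 t) - y"
  using pc_at[OF assms(2,3), of a y] assms(1) pre_U[OF assms(2)] by simp_all

lemma R_nonneg:
  assumes "T k \<le> t" "t < T (Suc k)" shows "0 \<le> pc_R X T a y t"
  using pc_at(3)[OF assms, of a y] c_nonneg[of a y k] by simp

lemma part1:
  assumes x0: "0 \<le> x" and ev: "tau0 X x < Tplus X T a x"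
  shows "tau0 X x \<le> first_time (\<lambda>t. pc_R X T a (x+\<epsilon>) t - pc_R X T a x t < 0)"
  unfolding first_time_def
proof (rule Inf_greatest, clarsimp)
  fix t assume t0: "0 < t" and neg: "pc_R X T a (x + \<epsilon>) t < pc_R X T a x t"
  show "tau0 X x \<le> ereal t"
  proof (rule ccontr)
    assume "\<not> tau0 X x \<le> ereal t"
    then have lt: "ereal t < tau0 X x" by simp
    then have lt2: "ereal t < Tplus X T a x" using ev by (rule less_trans)
    obtain k where k: "T k \<le> t" "t < T (Suc k)" using idx_ex[of t] t0 by auto
    have st: "pc_state X T a x k = (W x (T k), 0)" by (rule PR[OF x0 noreset[OF lt lt2 k(1)]])
    have "pc_R X T a x t = max x (Gs X 0 t) - x" by (rule pre_vals(3)[OF st k])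
    also have "\<dots> = 0" using G_le_tau[of t x] t0 lt by simp
    finally show False using neg R_nonneg[OF k, of a "x+\<epsilon>"] by simp
  qed
qed

lemma part3:
  assumes xe0: "0 \<le> x + \<epsilon>" and ev: "Tplus X T a (x+\<epsilon>) < tau0 X (x+\<epsilon>)"
  shows "Tplus X T a (x+\<epsilon>) \<le> first_time (\<lambda>t. pc_L X T a (x+\<epsilon>) t - pc_L X T a x t > 0)"
  unfolding first_time_def
proof (rule Inf_greatest, clarsimp)
  fix t assume t0: "0 < t" and pos: "pc_L X T a x t < pc_L X T a (x + \<epsilon>) t"
  show "Tplus X T a (x+\<epsilon>) \<le> ereal t"
  proof (rule ccontr)
    assume "\<not> Tplus X T a (x+\<epsilon>) \<le> ereal t"
    then have lt2: "ereal t < Tplus X T a (x+\<epsilon>)" by simp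
    then have lt: "ereal t < tau0 X (x+\<epsilon>)" using ev by (rule less_trans)
    obtain k where k: "T k \<le> t" "t < T (Suc k)" using idx_ex[of t] t0 by auto
    have st: "pc_state X T a (x+\<epsilon>) k = (W (x+\<epsilon>) (T k), 0)" by (rule PR[OF xe0 noreset[OF lt lt2 k(1)]])
    have "pc_L X T a (x+\<epsilon>) t = 0" by (rule pre_vals(1)[OF st k])
    moreover have "pc_L X T a x t \<ge> 0" using pc_at(2)[OF k, of a x] l_nonneg[of a x k] by simp
    ultimately show False using pos by simp
  qed
qed

lemma W_mono: "y \<le> y' \<Longrightarrow> W y t \<le> W y' t"
  unfolding W_def by simp

lemma part2_key:
  assumes x0: "0 \<le> x" and e0: "0 < \<epsilon>" and ev: "tau0 X (x+\<epsilon>) < Tplus X T a (x+\<epsilon>)" and j1: "1 \<le> j"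
  shows "(ereal (T j) < tau0 X (x+\<epsilon>) \<longrightarrow> W x (T j) \<le> a \<and> W (x+\<epsilon>) (T j) \<le> a)
       \<and> (tau0 X (x+\<epsilon>) \<le> ereal (T j) \<longrightarrow> W x (T j) = W (x+\<epsilon>) (T j))"
proof (intro conjI impI)
  assume lt: "ereal (T j) < tau0 X (x+\<epsilon>)"
  have "W (x+\<epsilon>) (T j) = X (T j) + (x+\<epsilon>)" by (rule W_eq[OF T_ge0 lt])
  also have "\<dots> \<le> a" using j1 lt ev by (intro Tplus_lt) auto
  finally show "W (x+\<epsilon>) (T j) \<le> a" .
  then show "W x (T j) \<le> a" using W_mono[of x "x+\<epsilon>" "T j"] e0 by simp
next
  assume le: "tau0 X (x+\<epsilon>) \<le> ereal (T j)"
  have "x + \<epsilon> \<le> Gs X 0 (T j)" by (rule tau_G[OF T_ge0 le])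
  then show "W x (T j) = W (x+\<epsilon>) (T j)" unfolding W_def using e0 by (simp add: max_def)
qed

lemma part2_t:
  assumes x0: "0 \<le> x" and e0: "0 < \<epsilon>" and ev: "tau0 X (x+\<epsilon>) < Tplus X T a (x+\<epsilon>)" and t0: "0 \<le> t"
  shows "pc_L X T a (x+\<epsilon>) t - pc_L X T a x t = 0
    \<and> (tau0 X (x+\<epsilon>) \<le> ereal t \<longrightarrow> pc_R X T a (x+\<epsilon>) t - pc_R X T a x t = - \<epsilon>)
    \<and> (ereal t < tau0 X x \<longrightarrow> pc_R X T a (x+\<epsilon>) t - pc_R X T a x t = 0)"
proof -
  note key = part2_key[OF x0 e0 ev]
  have xe0: "0 \<le> x + \<epsilon>" using x0 e0 by simp
  obtain k where k: "T k \<le> t" "t < T (Suc k)" using idx_ex[OF t0] by auto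
  show ?thesis
  proof (cases "\<forall>j\<in>{1..k}. W (x+\<epsilon>) (T j) \<le> a")
    case True
    have Tx: "\<forall>j\<in>{1..k}. W x (T j) \<le> a"
    proof
      fix j assume j: "j \<in> {1..k}"
      show "W x (T j) \<le> a"
      proof (cases "ereal (T j) < tau0 X (x+\<epsilon>)")
        case True then show ?thesis using key[of j] j by auto
      next
        case False then show ?thesis using key[of j] j \<open>\<forall>j\<in>{1..k}. W (x+\<epsilon>) (T j) \<le> a\<close> by auto
      qed
    qed
    have sx: "pc_state X T a x k = (W x (T k), 0)" by (rule PR[OF x0 Tx])
    have se: "pc_state X T a (x+\<epsilon>) k = (W (x+\<epsilon>) (T k), 0)" by (rule PR[OF xe0 True])
    note vx = pre_vals[OF sx k] and ve = pre_vals[OF se k]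
    show ?thesis
    proof (intro conjI impI)
      show "pc_L X T a (x+\<epsilon>) t - pc_L X T a x t = 0" using vx ve by simp
      assume "tau0 X (x+\<epsilon>) \<le> ereal t"
      then have "x + \<epsilon> \<le> Gs X 0 t" by (rule tau_G[OF t0])
      then show "pc_R X T a (x+\<epsilon>) t - pc_R X T a x t = - \<epsilon>" using vx ve e0 by (simp add: max_def)
    next
      assume "ereal t < tau0 X x"
      then have "Gs X 0 t \<le> x" by (rule G_le_tau[OF t0])
      then show "pc_R X T a (x+\<epsilon>) t - pc_R X T a x t = 0" using vx ve e0 by (simp add: max_def)
    qed
  next
    case False
    then have ex: "\<exists>j. 1 \<le> j \<and> a < W (x+\<epsilon>) (T j)" by (auto simp: not_le)
    define K where "K = (LEAST j. 1 \<le> j \<and> a < W (x+\<epsilon>) (T j))"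
    have K: "1 \<le> K \<and> a < W (x+\<epsilon>) (T K)" unfolding K_def using ex by (rule LeastI_ex)
    have Kmin: "\<forall>j\<in>{1..<K}. W (x+\<epsilon>) (T j) \<le> a"
      using not_less_Least[of _ "\<lambda>j. 1 \<le> j \<and> a < W (x+\<epsilon>) (T j)"] unfolding K_def[symmetric]
      by (auto simp: not_less)
    have Kk: "K \<le> k"
    proof -
      obtain j where "j \<in> {1..k}" "a < W (x+\<epsilon>) (T j)" using False by (auto simp: not_le)
      then have "K \<le> j" unfolding K_def by (intro Least_le) auto
      then show ?thesis using \<open>j \<in> {1..k}\<close> by auto
    qed
    have tauK: "tau0 X (x+\<epsilon>) \<le> ereal (T K)"
    proof (rule ccontr)
      assume "\<not> ?thesis"
      then have "ereal (T K) < tau0 X (x+\<epsilon>)" by simp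
      then show False using key[of K] K by auto
    qed
    have WK: "W x (T K) = W (x+\<epsilon>) (T K)" using key[of K] K tauK by auto
    have Kminx: "\<forall>j\<in>{1..<K}. W x (T j) \<le> a"
    proof
      fix j assume j: "j \<in> {1..<K}"
      show "W x (T j) \<le> a"
      proof (cases "ereal (T j) < tau0 X (x+\<epsilon>)")
        case True then show ?thesis using key[of j] j by auto
      next
        case False then show ?thesis using key[of j] j Kmin by auto
      qed
    qed
    have sx: "pc_state X T a x K = (a, W x (T K) - a)"
      using first_reset[OF x0 _ Kminx] K WK by simp
    have se: "pc_state X T a (x+\<epsilon>) K = (a, W (x+\<epsilon>) (T K) - a)"
      using first_reset[OF xe0 _ Kmin] K by simp
    have co: "fst (pc_state X T a (x+\<epsilon>) k) = fst (pc_state X T a x k) \<and>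
         snd (pc_state X T a (x+\<epsilon>) k) - snd (pc_state X T a x k) = 0"
      using coincide[of a "x+\<epsilon>" K x k] sx se WK Kk by simp
    have tK: "tau0 X (x+\<epsilon>) \<le> ereal t"
      using tauK k(1) T_le[OF Kk] by (meson ereal_less_eq(3) order_trans)
    have DL: "pc_L X T a (x+\<epsilon>) t - pc_L X T a x t = 0" using co pc_at(2)[OF k] by simp
    have DU: "pc_U X T a (x+\<epsilon>) t = pc_U X T a x t" using co pc_at(1)[OF k] by simp
    have DR: "pc_R X T a (x+\<epsilon>) t - pc_R X T a x t = - \<epsilon>" using DL DU unfolding pc_R_def by simp
    have "tau0 X x \<le> ereal t" using tK tau0_mono[of \<epsilon> x] e0 by (meson order_trans less_imp_le)
    then have "\<not> ereal t < tau0 X x" by simp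
    then show ?thesis using DL DR by simp
  qed
qed

lemma part4_t:
  assumes x0: "0 \<le> x" and e0: "0 < \<epsilon>" and ev: "Tplus X T a x < tau0 X x" and t0: "0 \<le> t"
  shows "(ereal t < Tplus X T a (x+\<epsilon>) \<longrightarrow> pc_L X T a (x+\<epsilon>) t - pc_L X T a x t = 0)
    \<and> (Tplus X T a x \<le> ereal t \<longrightarrow> pc_L X T a (x+\<epsilon>) t - pc_L X T a x t = \<epsilon>)
    \<and> (pc_R X T a (x+\<epsilon>) t - pc_R X T a x t = 0)"
proof -
  have xe0: "0 \<le> x + \<epsilon>" using x0 e0 by simp
  have fin: "Tplus X T a x < \<infinity>" using ev by (metis ereal_less_PInfty less_PInf_Ex_of_nat not_less_iff_gr_or_eq order.strict_trans)
  obtain J where J: "1 \<le> J" "Tplus X T a x = ereal (T J)" "a < X (T J) + x"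
    "\<forall>j. 1 \<le> j \<longrightarrow> j < J \<longrightarrow> X (T j) + x \<le> a" using Tplus_att[OF fin] by blast
  have fin2: "Tplus X T a (x+\<epsilon>) < \<infinity>" using Tplus_anti[of \<epsilon> a x] e0 fin by (meson le_less_trans less_imp_le)
  obtain K where K: "1 \<le> K" "Tplus X T a (x+\<epsilon>) = ereal (T K)" "a < X (T K) + (x+\<epsilon>)"
    "\<forall>j. 1 \<le> j \<longrightarrow> j < K \<longrightarrow> X (T j) + (x+\<epsilon>) \<le> a" using Tplus_att[OF fin2] by blast
  have TJ: "ereal (T J) < tau0 X x" using ev J(2) by simp
  have pos: "0 \<le> X s + x" if "0 \<le> s" "s \<le> T J" for s using tau0_pos[OF TJ that(2,1)] .
  have KJ: "K \<le> J"
  proof (rule ccontr)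
    assume "\<not> K \<le> J"
    then have "X (T J) + (x+\<epsilon>) \<le> a" using K(4) J(1) by auto
    then show False using J(3) e0 by simp
  qed
  have Wx: "W x (T j) = X (T j) + x" if "j \<le> J" for j
  proof (rule W_eq[OF T_ge0])
    show "ereal (T j) < tau0 X x" using TJ T_le[OF that] by (meson ereal_less_eq(3) le_less_trans)
  qed
  have We: "W (x+\<epsilon>) (T j) = X (T j) + (x+\<epsilon>)" if "j \<le> J" for j
  proof (rule W_eq[OF T_ge0])
    show "ereal (T j) < tau0 X (x+\<epsilon>)" using TJ T_le[OF that] tau0_mono[of \<epsilon> x] e0
      by (meson ereal_less_eq(3) le_less_trans less_le_trans less_imp_le)
  qed
  have sx_pre: "pc_state X T a x j = (X (T j) + x, 0)" if "j < J" for j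
  proof -
    have "\<forall>i\<in>{1..j}. W x (T i) \<le> a" using Wx J(4) that by auto
    then show ?thesis using PR[OF x0] Wx that by simp
  qed
  have sx_J: "pc_state X T a x J = (a, X (T J) + x - a)"
  proof -
    have "\<forall>i\<in>{1..<J}. W x (T i) \<le> a" using Wx J(4) by auto
    then show ?thesis using first_reset[OF x0 J(1)] Wx[of J] J(3) by simp
  qed
  have se_pre: "pc_state X T a (x+\<epsilon>) j = (X (T j) + (x+\<epsilon>), 0)" if "j < K" for j
  proof -
    have "\<forall>i\<in>{1..j}. W (x+\<epsilon>) (T i) \<le> a" using We K(4) that KJ by auto
    then show ?thesis using PR[OF xe0] We that KJ by simp
  qed
  have Gx: "Gs X (T j) t' \<le> x" if "T j \<le> t'" "t' \<le> T J" for j t'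
    using that pos T_ge0[of j] by (subst G_le_iff) (auto, smt (verit) T_ge0)
  have inv: "fst (pc_state X T a (x+\<epsilon>) j) + snd (pc_state X T a (x+\<epsilon>) j) = X (T j) + (x+\<epsilon>)" if "j \<le> J" for j
    using that
  proof (induction j)
    case 0 then show ?case by (simp add: X0 T0)
  next
    case (Suc j)
    define u where "u = fst (pc_state X T a (x+\<epsilon>) j)"
    have "u \<ge> X (T j) + x" using u_mono[of x "x+\<epsilon>" a j] e0 sx_pre[of j] Suc.prems unfolding u_def by simp
    moreover have "Gs X (T j) (T (Suc j)) \<le> x" using Suc.prems by (intro Gx) (auto intro: T_le)
    ultimately have V: "Vf u j = X (T (Suc j)) + u - X (T j)" unfolding Vf_def by simp
    show ?case using Suc.IH Suc.prems unfolding st_Suc u_def[symmetric] V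
      by (simp add: u_def)
  qed
  have se_J: "pc_state X T a (x+\<epsilon>) J = (a, X (T J) + (x+\<epsilon>) - a)"
  proof -
    have "fst (pc_state X T a (x+\<epsilon>) J) = a"
      using u_mono[of x "x+\<epsilon>" a J] e0 sx_J fst_le_a[OF J(1), of a "x+\<epsilon>"] by simp
    then show ?thesis using inv[of J] by (cases "pc_state X T a (x+\<epsilon>) J") simp
  qed
  have co: "fst (pc_state X T a (x+\<epsilon>) k) = fst (pc_state X T a x k) \<and>
         snd (pc_state X T a (x+\<epsilon>) k) - snd (pc_state X T a x k) = \<epsilon>" if "J \<le> k" for k
    using coincide[of a "x+\<epsilon>" J x k] sx_J se_J that by simp
  obtain k where k: "T k \<le> t" "t < T (Suc k)" using idx_ex[OF t0] by auto
  show ?thesis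
  proof (intro conjI impI)
    assume "ereal t < Tplus X T a (x+\<epsilon>)"
    then have "t < T K" using K(2) by simp
    then have "k < K" using k(1) T_less_iff[of k K] by simp
    then show "pc_L X T a (x+\<epsilon>) t - pc_L X T a x t = 0"
      using pc_at(2)[OF k] se_pre[of k] sx_pre[of k] KJ by simp
  next
    assume "Tplus X T a x \<le> ereal t"
    then have "T J < T (Suc k)" using J(2) k(2) by simp
    then have "J \<le> k" using T_less_iff[of J "Suc k"] by simp
    then show "pc_L X T a (x+\<epsilon>) t - pc_L X T a x t = \<epsilon>"
      using pc_at(2)[OF k] co[of k] by simp
  next
    show "pc_R X T a (x+\<epsilon>) t - pc_R X T a x t = 0"
    proof (cases "J \<le> k")
      case True
      have DL: "pc_L X T a (x+\<epsilon>) t - pc_L X T a x t = \<epsilon>" using pc_at(2)[OF k] co[OF True] by simp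
      have DU: "pc_U X T a (x+\<epsilon>) t = pc_U X T a x t" using co[OF True] pc_at(1)[OF k] by simp
      show ?thesis using DL DU unfolding pc_R_def by simp
    next
      case False
      then have kJ: "k < J" by simp
      have tJ: "t \<le> T J" using k(2) T_le[of "Suc k" J] kJ by simp
      have G: "Gs X (T k) t \<le> x" using Gx[OF k(1) tJ] .
      have ue: "fst (pc_state X T a (x+\<epsilon>) k) \<ge> X (T k) + x"
        using u_mono[of x "x+\<epsilon>" a k] e0 sx_pre[OF kJ] by simp
      have Rx: "pc_R X T a x t = 0" using pc_at(3)[OF k, of a x] sx_pre[OF kJ] G by simp
      have Re: "pc_R X T a (x+\<epsilon>) t = 0" using pc_at(3)[OF k, of a "x+\<epsilon>"] ue G inv[of k] kJ by simp
      show ?thesis using Rx Re by simp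
    qed
  qed
qed

lemma det_main:
  assumes x0: "0 \<le> x" and e0: "0 < \<epsilon>"
  shows "(tau0 X x < Tplus X T a x \<longrightarrow>
         first_time (\<lambda>t. pc_R X T a (x + \<epsilon>) t - pc_R X T a x t < 0) \<ge> tau0 X x)
    \<and> (tau0 X (x + \<epsilon>) < Tplus X T a (x + \<epsilon>) \<longrightarrow>
         (\<forall>t\<ge>0. pc_L X T a (x + \<epsilon>) t - pc_L X T a x t = 0)
       \<and> (\<forall>t\<ge>0. ereal t < tau0 X x \<longrightarrow> pc_R X T a (x + \<epsilon>) t - pc_R X T a x t = 0)
       \<and> (\<forall>t\<ge>0. tau0 X (x + \<epsilon>) \<le> ereal t \<longrightarrow> pc_R X T a (x + \<epsilon>) t - pc_R X T a x t = - \<epsilon>))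
    \<and> (Tplus X T a (x + \<epsilon>) < tau0 X (x + \<epsilon>) \<longrightarrow>
         first_time (\<lambda>t. pc_L X T a (x + \<epsilon>) t - pc_L X T a x t > 0) \<ge> Tplus X T a (x + \<epsilon>))
    \<and> (Tplus X T a x < tau0 X x \<longrightarrow>
         (\<forall>t\<ge>0. ereal t < Tplus X T a (x + \<epsilon>) \<longrightarrow> pc_L X T a (x + \<epsilon>) t - pc_L X T a x t = 0)
       \<and> (\<forall>t\<ge>0. Tplus X T a x \<le> ereal t \<longrightarrow> pc_L X T a (x + \<epsilon>) t - pc_L X T a x t = \<epsilon>)
       \<and> (\<forall>t\<ge>0. pc_R X T a (x + \<epsilon>) t - pc_R X T a x t = 0))"
proof (intro conjI impI allI)
  assume "tau0 X x < Tplus X T a x"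
  then show "first_time (\<lambda>t. pc_R X T a (x + \<epsilon>) t - pc_R X T a x t < 0) \<ge> tau0 X x"
    by (rule part1[OF x0])
next
  fix t :: real assume "tau0 X (x + \<epsilon>) < Tplus X T a (x + \<epsilon>)" "0 \<le> t"
  note p = part2_t[OF x0 e0 this]
  show "pc_L X T a (x + \<epsilon>) t - pc_L X T a x t = 0" using p by blast
  show "ereal t < tau0 X x \<Longrightarrow> pc_R X T a (x + \<epsilon>) t - pc_R X T a x t = 0" using p by blast
  show "tau0 X (x + \<epsilon>) \<le> ereal t \<Longrightarrow> pc_R X T a (x + \<epsilon>) t - pc_R X T a x t = - \<epsilon>" using p by blast
next
  assume "Tplus X T a (x + \<epsilon>) < tau0 X (x + \<epsilon>)"
  then show "first_time (\<lambda>t. pc_L X T a (x + \<epsilon>) t - pc_L X T a x t > 0) \<ge> Tplus X T a (x + \<epsilon>)"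
    using x0 e0 by (intro part3) auto
next
  fix t :: real assume "Tplus X T a x < tau0 X x" "0 \<le> t"
  note p = part4_t[OF x0 e0 this]
  show "ereal t < Tplus X T a (x + \<epsilon>) \<Longrightarrow> pc_L X T a (x + \<epsilon>) t - pc_L X T a x t = 0" using p by blast
  show "Tplus X T a x \<le> ereal t \<Longrightarrow> pc_L X T a (x + \<epsilon>) t - pc_L X T a x t = \<epsilon>" using p by blast
  show "pc_R X T a (x + \<epsilon>) t - pc_R X T a x t = 0" using p by blast
qed

end


lemma abs_aux: fixes A B C l :: real assumes "\<bar>A - l\<bar> < \<bar>l - C\<bar>/4" "\<bar>B - C\<bar> < \<bar>l - C\<bar>/4" shows "\<bar>l - C\<bar>/2 < \<bar>B - A\<bar>"
  using assms by (simp add: abs_if split: if_split_asm)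

locale pset =
  fixes M :: "'w measure" and X :: "real \<Rightarrow> 'w \<Rightarrow> real" and T :: "nat \<Rightarrow> 'w \<Rightarrow> real" and r :: real
  assumes levy: "levy_process M X" and rpos: "0 < r" and pois: "poisson_arrivals M r T"
    and ind: "indep_processes M X T"
begin

sublocale prob_space M using levy unfolding levy_process_def by auto

lemma Xmeas[measurable]: "X t \<in> borel_measurable M" using levy unfolding levy_process_def by auto
lemma Tmeas[measurable]: "T k \<in> borel_measurable M" using pois unfolding poisson_arrivals_def by auto

lemma null_of_measure0: "A \<in> sets M \<Longrightarrow> measure M A = 0 \<Longrightarrow> A \<in> null_sets M"
  by (simp add: null_sets_def emeasure_eq_measure)

lemma Ddistr: "distributed M lborel (\<lambda>\<omega>. T (Suc k) \<omega> - T k \<omega>) (exponential_density r)"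
  using pois unfolding poisson_arrivals_def by auto

lemma AE_Tinc: "AE \<omega> in M. \<forall>k. T k \<omega> < T (Suc k) \<omega>"
proof (subst AE_all_countable, intro allI)
  fix k
  have "prob {\<omega>\<in>space M. T (Suc k) \<omega> - T k \<omega> \<le> 0} = 0"
    using exponential_distributedD_le[OF Ddistr[of k] order_refl rpos] by simp
  then have N: "{\<omega>\<in>space M. T (Suc k) \<omega> - T k \<omega> \<le> 0} \<in> null_sets M"
    by (intro null_of_measure0) measurable
  show "AE \<omega> in M. T k \<omega> < T (Suc k) \<omega>"
    by (rule AE_I'[OF N]) auto
qed

lemma Dindep: "indep_vars (\<lambda>_. borel) (\<lambda>k \<omega>. T (Suc k) \<omega> - T k \<omega>) UNIV"
  using pois unfolding poisson_arrivals_def by auto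

lemma AE_Dbig: "AE \<omega> in M. \<forall>N. \<not> (\<forall>i\<ge>N. T (Suc i) \<omega> - T i \<omega> \<le> 1)"
proof (subst AE_all_countable, intro allI)
  fix N
  define q where "q = 1 - exp (- r)"
  have q: "0 \<le> q" "q < 1" unfolding q_def using rpos by auto
  define B where "B = {\<omega>\<in>space M. \<forall>i\<ge>N. T (Suc i) \<omega> - T i \<omega> \<le> 1}"
  have Bm: "B \<in> sets M" unfolding B_def by measurable
  have pi: "prob {\<omega>\<in>space M. T (Suc i) \<omega> - T i \<omega> \<le> 1} = q" for i
    using exponential_distributedD_le[OF Ddistr[of i] _ rpos, of 1] unfolding q_def by simp
  have bound: "prob B \<le> q ^ Suc m" for m
  proof -
    define J where "J = {N..N + m}"
    define A where "A i = (\<lambda>\<omega>. T (Suc i) \<omega> - T i \<omega>) -` {..1} \<inter> space M" for i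
    have Aeq: "A i = {\<omega>\<in>space M. T (Suc i) \<omega> - T i \<omega> \<le> 1}" for i unfolding A_def by auto
    have "B \<subseteq> (\<Inter>i\<in>J. A i)" unfolding B_def J_def Aeq by auto
    then have "prob B \<le> prob (\<Inter>i\<in>J. A i)"
      by (intro finite_measure_mono) (auto simp: J_def Aeq)
    also have "\<dots> = (\<Prod>i\<in>J. prob (A i))"
      using Dindep unfolding indep_vars_def
      by (intro indep_setsD[of _ UNIV]) (auto simp: J_def A_def intro!: sigma_sets.Basic exI[of _ "{..1::real}"])
    also have "\<dots> = q ^ Suc m" unfolding Aeq pi J_def by simp
    finally show ?thesis .
  qed
  have "(\<lambda>m. q ^ Suc m) \<longlonglongrightarrow> 0"
    using LIMSEQ_power_zero[of q] q by (intro LIMSEQ_Suc) simp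
  then have "prob B \<le> 0" by (rule LIMSEQ_le_const) (use bound in blast)
  then have "B \<in> null_sets M" using Bm measure_nonneg[of M B] by (intro null_of_measure0) auto
  then show "AE \<omega> in M. \<not> (\<forall>i\<ge>N. T (Suc i) \<omega> - T i \<omega> \<le> 1)"
    by (rule AE_I') (auto simp: B_def)
qed

lemma unbounded_det:
  fixes t :: "nat \<Rightarrow> real"
  assumes inc: "\<forall>k. t k < t (Suc k)" and big: "\<forall>N. \<not> (\<forall>i\<ge>N. t (Suc i) - t i \<le> 1)"
  shows "\<forall>s. \<exists>k. s < t k"
proof (rule ccontr)
  assume "\<not> ?thesis"
  then obtain s where s: "\<forall>k. t k \<le> s" by (auto simp: not_less)
  have "incseq t" using inc by (intro incseq_SucI) (simp add: less_imp_le)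
  moreover have "bdd_above (range t)" using s by (intro bdd_aboveI2) auto
  ultimately have lim: "t \<longlonglongrightarrow> (SUP i. t i)" by (intro LIMSEQ_incseq_SUP)
  have "(\<lambda>i. t (Suc i) - t i) \<longlonglongrightarrow> (SUP i. t i) - (SUP i. t i)"
    by (intro tendsto_diff LIMSEQ_Suc lim)
  then have "eventually (\<lambda>i. t (Suc i) - t i < 1) sequentially"
    by (intro order_tendstoD) auto
  then obtain N where "\<forall>i\<ge>N. t (Suc i) - t i < 1" unfolding eventually_sequentially by blast
  then show False using big by (meson less_imp_le)
qed

lemma AE_Tunb: "AE \<omega> in M. \<forall>s. \<exists>k. s < T k \<omega>"
  using AE_Tinc AE_Dbig by eventually_elim (rule unbounded_det)

definition hh :: "nat \<Rightarrow> real" where "hh n = (1/2)^n"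

lemma hh_pos: "0 < hh n" unfolding hh_def by simp

definition GX where "GX = {X t -` B \<inter> space M | t B. B \<in> sets borel}"
definition GT where "GT = {T k -` B \<inter> space M | k B. B \<in> sets borel}"

lemma indepXT: "a \<in> sigma_sets (space M) GX \<Longrightarrow> b \<in> sigma_sets (space M) GT \<Longrightarrow> prob (a \<inter> b) = prob a * prob b"
  using ind unfolding indep_processes_def GX_def GT_def by (rule indep_setD)

lemma E_sigmaX: "{\<omega>\<in>space M. c < \<bar>X s2 \<omega> - X s1 \<omega>\<bar>} \<in> sigma_sets (space M) GX"
proof -
  define MX where "MX = sigma (space M) GX"
  have sub: "GX \<subseteq> Pow (space M)" unfolding GX_def by auto
  have sp: "space MX = space M" unfolding MX_def using sub by (rule space_measure_of)
  have se: "sets MX = sigma_sets (space M) GX" unfolding MX_def using sub by (rule sets_measure_of)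
  have mX[measurable]: "X t \<in> borel_measurable MX" for t
  proof (rule measurableI)
    fix A :: "real set" assume "A \<in> sets borel"
    then have "X t -` A \<inter> space M \<in> GX" unfolding GX_def by blast
    then show "X t -` A \<inter> space MX \<in> sets MX" unfolding sp se by (rule sigma_sets.Basic)
  qed auto
  have "{\<omega>\<in>space MX. c < \<bar>X s2 \<omega> - X s1 \<omega>\<bar>} \<in> sets MX" by measurable
  then show ?thesis unfolding sp se .
qed

lemma I_sigmaT: "T k -` {a<..b} \<inter> space M \<in> sigma_sets (space M) GT"
  by (rule sigma_sets.Basic) (auto simp: GT_def intro!: exI[of _ k] exI[of _ "{a<..b}"])

lemma stat:
  assumes "0 \<le> s" "0 \<le> h"
  shows "prob {\<omega>\<in>space M. c < \<bar>X (s + h) \<omega> - X s \<omega>\<bar>} = prob {\<omega>\<in>space M. c < \<bar>X h \<omega> - X 0 \<omega>\<bar>}"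
proof -
  define S where "S = {y::real. c < \<bar>y\<bar>}"
  have S: "S \<in> sets borel" unfolding S_def by measurable
  have eq: "distr M borel (\<lambda>\<omega>. X (s + h) \<omega> - X s \<omega>) = distr M borel (\<lambda>\<omega>. X h \<omega> - X 0 \<omega>)"
    using levy assms unfolding levy_process_def by auto
  have "prob {\<omega>\<in>space M. c < \<bar>X (s + h) \<omega> - X s \<omega>\<bar>} = measure (distr M borel (\<lambda>\<omega>. X (s + h) \<omega> - X s \<omega>)) S"
    by (subst measure_distr[OF _ S]) (auto simp: S_def intro!: arg_cong[where f="measure M"])
  also have "\<dots> = measure (distr M borel (\<lambda>\<omega>. X h \<omega> - X 0 \<omega>)) S" by (simp add: eq)
  also have "\<dots> = prob {\<omega>\<in>space M. c < \<bar>X h \<omega> - X 0 \<omega>\<bar>}"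
    by (subst measure_distr[OF _ S]) (auto simp: S_def intro!: arg_cong[where f="measure M"])
  finally show ?thesis .
qed

lemma AE_cadlag: "AE \<omega> in M. cadlag (\<lambda>t. X t \<omega>)" using levy unfolding levy_process_def by auto
lemma AE_X0: "AE \<omega> in M. X 0 \<omega> = 0" using levy unfolding levy_process_def by auto

lemma p_lim:
  assumes c: "0 < c"
  shows "(\<lambda>n. prob {\<omega>\<in>space M. c < \<bar>X (hh n) \<omega> - X 0 \<omega>\<bar>}) \<longlonglongrightarrow> 0"
proof -
  define E where "E n = {\<omega>\<in>space M. c < \<bar>X (hh n) \<omega> - X 0 \<omega>\<bar>}" for n
  define G where "G n = (\<Union>i\<in>{n..}. E i)" for n
  have Em: "E n \<in> sets M" for n unfolding E_def by measurable
  have Gm: "G n \<in> sets M" for n unfolding G_def using Em by auto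
  have dec: "decseq G" unfolding G_def decseq_def by (auto; meson atLeast_iff order_trans)
  have ev: "AE \<omega> in M. \<exists>N. \<forall>n\<ge>N. \<omega> \<notin> E n"
    using AE_cadlag
  proof eventually_elim
    case (elim \<omega>)
    then have "((\<lambda>t. X t \<omega>) \<longlongrightarrow> X 0 \<omega>) (at_right 0)" unfolding cadlag_def continuous_within by auto
    then have "\<forall>\<^sub>F s in at_right 0. dist (X s \<omega>) (X 0 \<omega>) < c" using c by (rule tendstoD)
    then obtain b where b: "b > 0" "\<And>s. 0 < s \<Longrightarrow> s < b \<Longrightarrow> dist (X s \<omega>) (X 0 \<omega>) < c"
      unfolding eventually_at_right_field by auto
    obtain N where N: "(1/2::real)^N < b" using real_arch_pow_inv[OF b(1), of "1/2"] by auto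
    have "\<omega> \<notin> E n" if "n \<ge> N" for n
    proof -
      have hn: "hh n \<le> hh N" unfolding hh_def using that by (intro power_decreasing) auto
      have hb: "hh n < b" using hn N unfolding hh_def by linarith
      have "dist (X (hh n) \<omega>) (X 0 \<omega>) < c" by (rule b(2)[OF hh_pos hb])
      then show ?thesis unfolding E_def by (auto simp: dist_real_def)
    qed
    then show ?case by blast
  qed
  have sub: "(\<Inter>n. G n) \<subseteq> space M" unfolding G_def E_def by auto
  have "emeasure M (\<Inter>n. G n) = 0"
  proof -
    have "(AE \<omega> in M. \<omega> \<notin> (\<Inter>n. G n)) \<longleftrightarrow> emeasure M (\<Inter>n. G n) = 0"
      by (rule AE_iff_measurable) (use Gm sub in auto)
    moreover have "AE \<omega> in M. \<omega> \<notin> (\<Inter>n. G n)"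
      using ev
    proof eventually_elim
      case (elim \<omega>)
      then obtain N where "\<forall>n\<ge>N. \<omega> \<notin> E n" by blast
      then have "\<omega> \<notin> G N" unfolding G_def by auto
      then show ?case by blast
    qed
    ultimately show ?thesis by simp
  qed
  then have m0: "prob (\<Inter>n. G n) = 0" by (simp add: measure_def)
  have lim: "(\<lambda>n. prob (G n)) \<longlonglongrightarrow> 0"
    using finite_Lim_measure_decseq[of G] Gm dec m0 by auto
  show ?thesis unfolding E_def[symmetric]
  proof (rule tendsto_sandwich[OF _ _ tendsto_const lim])
    show "\<forall>\<^sub>F n in sequentially. 0 \<le> prob (E n)" by simp
    show "\<forall>\<^sub>F n in sequentially. prob (E n) \<le> prob (G n)"
      using Gm by (intro always_eventually allI finite_measure_mono) (auto simp: G_def)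
  qed
qed

definition II :: "nat \<Rightarrow> nat \<Rightarrow> nat \<Rightarrow> 'w set" where
  "II k n j = T k -` {real j * hh n <.. real j * hh n + hh n} \<inter> space M"
definition EE :: "real \<Rightarrow> nat \<Rightarrow> nat \<Rightarrow> 'w set" where
  "EE c n j = {\<omega>\<in>space M. c < \<bar>X (real j * hh n + hh n) \<omega> - X (real j * hh n) \<omega>\<bar>}"

lemma A_bound:
  "prob (\<Union>j. II k n j \<inter> EE c n j) \<le> prob {\<omega>\<in>space M. c < \<bar>X (hh n) \<omega> - X 0 \<omega>\<bar>}"
proof -
  define p where "p = prob {\<omega>\<in>space M. c < \<bar>X (hh n) \<omega> - X 0 \<omega>\<bar>}"
  have Im: "II k n j \<in> sets M" for j unfolding II_def by measurable
  have Emm: "EE c n j \<in> sets M" for j unfolding EE_def by measurable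
  have pe: "prob (EE c n j) = p" for j
    unfolding EE_def p_def using stat[of "real j * hh n" "hh n" c] hh_pos[of n] by simp
  have trm: "prob (II k n j \<inter> EE c n j) = prob (II k n j) * p" for j
  proof -
    have "prob (EE c n j \<inter> II k n j) = prob (EE c n j) * prob (II k n j)"
      unfolding EE_def II_def by (intro indepXT E_sigmaX I_sigmaT)
    then show ?thesis using pe by (simp add: Int_commute mult.commute)
  qed
  have disj: "disjoint_family (II k n)"
    unfolding disjoint_family_on_def
  proof (intro ballI impI)
    fix i j :: nat assume "i \<in> UNIV" "j \<in> UNIV" "i \<noteq> j"
    show "II k n i \<inter> II k n j = {}"
    proof (rule ccontr)
      assume "II k n i \<inter> II k n j \<noteq> {}"
      then obtain \<omega> where w: "real i * hh n < T k \<omega>" "T k \<omega> \<le> real i * hh n + hh n"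
          "real j * hh n < T k \<omega>" "T k \<omega> \<le> real j * hh n + hh n" unfolding II_def by auto
      have h: "0 < hh n" by (rule hh_pos)
      have "i < j \<or> j < i" using \<open>i \<noteq> j\<close> by auto
      then show False
      proof
        assume "i < j" then have "real i + 1 \<le> real j" by simp
        then have "real i * hh n + hh n \<le> real j * hh n" using h
          by (metis distrib_right mult_1 mult_right_mono less_imp_le)
        then show False using w by simp
      next
        assume "j < i" then have "real j + 1 \<le> real i" by simp
        then have "real j * hh n + hh n \<le> real i * hh n" using h
          by (metis distrib_right mult_1 mult_right_mono less_imp_le)
        then show False using w by simp
      qed
    qed
  qed
  have sums: "(\<lambda>j. prob (II k n j)) sums prob (\<Union>j. II k n j)"
    using Im disj by (intro finite_measure_UNION) auto
  have sums2: "(\<lambda>j. prob (II k n j \<inter> EE c n j)) sums (prob (\<Union>j. II k n j) * p)"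
    unfolding trm by (intro sums_mult2 sums)
  have "prob (\<Union>j. II k n j \<inter> EE c n j) \<le> (\<Sum>j. prob (II k n j \<inter> EE c n j))"
    using Im Emm sums2 by (intro finite_measure_subadditive_countably) (auto simp: sums_iff)
  also have "\<dots> = prob (\<Union>j. II k n j) * p" using sums2 by (simp add: sums_iff)
  also have "\<dots> \<le> 1 * p" unfolding p_def by (intro mult_right_mono) auto
  finally show ?thesis unfolding p_def by simp
qed

lemma Bad_null:
  assumes c: "0 < c"
  shows "(\<Inter>n\<in>{N..}. \<Union>j. II k n j \<inter> EE c n j) \<in> null_sets M"
proof -
  have Im: "II k n j \<in> sets M" for n j unfolding II_def by measurable
  have Emm: "EE c n j \<in> sets M" for n j unfolding EE_def by measurable
  have Bm: "(\<Inter>n\<in>{N..}. \<Union>j. II k n j \<inter> EE c n j) \<in> sets M" using Im Emm by auto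
  have le: "prob (\<Inter>n\<in>{N..}. \<Union>j. II k n j \<inter> EE c n j) \<le> prob {\<omega>\<in>space M. c < \<bar>X (hh n) \<omega> - X 0 \<omega>\<bar>}"
    if "n \<ge> N" for n
  proof -
    have "prob (\<Inter>n\<in>{N..}. \<Union>j. II k n j \<inter> EE c n j) \<le> prob (\<Union>j. II k n j \<inter> EE c n j)"
      using Im Emm that by (intro finite_measure_mono) auto
    also have "\<dots> \<le> prob {\<omega>\<in>space M. c < \<bar>X (hh n) \<omega> - X 0 \<omega>\<bar>}" by (rule A_bound)
    finally show ?thesis .
  qed
  have "prob (\<Inter>n\<in>{N..}. \<Union>j. II k n j \<inter> EE c n j) \<le> 0"
    by (rule LIMSEQ_le_const[OF p_lim[OF c]]) (use le in blast)
  then show ?thesis using Bm measure_nonneg[of M] by (intro null_of_measure0) (auto intro: antisym)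
qed

lemma jump_pw:
  assumes w: "\<omega> \<in> space M" and cad: "cadlag (\<lambda>t. X t \<omega>)" and tp: "0 < T k \<omega>"
    and nt: "\<not> ((\<lambda>t. X t \<omega>) \<longlongrightarrow> X (T k \<omega>) \<omega>) (at_left (T k \<omega>))"
  shows "\<exists>m N. \<omega> \<in> (\<Inter>n\<in>{N..}. \<Union>j. II k n j \<inter> EE (inverse (real (Suc m))) n j)"
proof -
  define f where "f t = X t \<omega>" for t
  define \<tau> where "\<tau> = T k \<omega>"
  obtain l where l: "(f \<longlongrightarrow> l) (at_left \<tau>)" using cad tp unfolding cadlag_def f_def \<tau>_def by auto
  have ne: "l \<noteq> f \<tau>" using l nt unfolding f_def \<tau>_def by auto
  define \<delta> where "\<delta> = \<bar>l - f \<tau>\<bar>"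
  have d0: "0 < \<delta>" unfolding \<delta>_def using ne by simp
  obtain m where m: "inverse (real (Suc m)) < \<delta> / 2" using reals_Archimedean[of "\<delta>/2"] d0 by auto
  have "\<forall>\<^sub>F s in at_left \<tau>. dist (f s) l < \<delta>/4" using l d0 by (intro tendstoD) auto
  then obtain b1 where b1: "b1 < \<tau>" "\<And>s. b1 < s \<Longrightarrow> s < \<tau> \<Longrightarrow> dist (f s) l < \<delta>/4"
    unfolding eventually_at_left_field by blast
  have "(f \<longlongrightarrow> f \<tau>) (at_right \<tau>)" using cad tp unfolding cadlag_def continuous_within f_def \<tau>_def by auto
  then have "\<forall>\<^sub>F s in at_right \<tau>. dist (f s) (f \<tau>) < \<delta>/4" using d0 by (intro tendstoD) auto
  then obtain b2 where b2: "\<tau> < b2" "\<And>s. \<tau> < s \<Longrightarrow> s < b2 \<Longrightarrow> dist (f s) (f \<tau>) < \<delta>/4"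
    unfolding eventually_at_right_field by blast
  define d where "d = min (\<tau> - b1) (b2 - \<tau>)"
  have dpos: "0 < d" unfolding d_def using b1 b2 by simp
  obtain N where N: "(1/2::real)^N < d" using real_arch_pow_inv[OF dpos, of "1/2"] by auto
  have "\<omega> \<in> (\<Union>j. II k n j \<inter> EE (inverse (real (Suc m))) n j)" if n: "n \<ge> N" for n
  proof -
    define h where "h = hh n"
    have h0: "0 < h" unfolding h_def by (rule hh_pos)
    have hn: "hh n \<le> hh N" unfolding hh_def using n by (intro power_decreasing) auto
    have hd: "h < d" using hn N unfolding hh_def h_def by linarith
    define c where "c = \<lceil>\<tau> / h\<rceil>"
    have tpos: "0 < \<tau> / h" using tp h0 unfolding \<tau>_def by simp
    have c1: "1 \<le> c" unfolding c_def using tpos by (simp add: ceiling_le_zero[symmetric] not_le) 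
    define j where "j = nat (c - 1)"
    have rj: "real j = real_of_int c - 1" unfolding j_def using c1 by simp
    have cl: "real_of_int c - 1 < \<tau> / h" "\<tau> / h \<le> real_of_int c" unfolding c_def by linarith+
    have s1: "real j * h < \<tau>" using cl(1) h0 unfolding rj by (simp add: field_simps)
    have s2: "\<tau> \<le> real j * h + h" using cl(2) h0 unfolding rj by (simp add: field_simps)
    have s1b: "b1 < real j * h" using s2 hd unfolding d_def by linarith
    have s2b: "real j * h + h < b2" using s1 hd unfolding d_def by linarith
    have e1: "\<bar>f (real j * h) - l\<bar> < \<delta>/4" using b1(2)[OF s1b s1] by (simp add: dist_real_def)
    have e2: "\<bar>f (real j * h + h) - f \<tau>\<bar> < \<delta>/4"
    proof (cases "\<tau> = real j * h + h")
      case True then show ?thesis using d0 by simp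
    next
      case False then have "\<tau> < real j * h + h" using s2 by simp
      then show ?thesis using b2(2)[OF _ s2b] by (simp add: dist_real_def)
    qed
    have "\<delta> / 2 < \<bar>f (real j * h + h) - f (real j * h)\<bar>"
      using abs_aux[OF e1[unfolded \<delta>_def] e2[unfolded \<delta>_def]] unfolding \<delta>_def .
    then have "inverse (real (Suc m)) < \<bar>X (real j * hh n + hh n) \<omega> - X (real j * hh n) \<omega>\<bar>"
      using m unfolding f_def h_def by linarith
    then have "\<omega> \<in> II k n j \<inter> EE (inverse (real (Suc m))) n j"
      unfolding II_def EE_def using w s1 s2 unfolding \<tau>_def h_def by auto
    then show ?thesis by blast
  qed
  then show ?thesis by blast
qed

lemma AE_jump: "AE \<omega> in M. \<forall>k. cadlag (\<lambda>t. X t \<omega>) \<longrightarrow> 0 < T k \<omega> \<longrightarrow>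
    ((\<lambda>t. X t \<omega>) \<longlongrightarrow> X (T k \<omega>) \<omega>) (at_left (T k \<omega>))"
proof (subst AE_all_countable, intro allI)
  fix k
  define NN where "NN = (\<Union>m. \<Union>N. (\<Inter>n\<in>{N..}. \<Union>j. II k n j \<inter> EE (inverse (real (Suc m))) n j))"
  have nn: "NN \<in> null_sets M" unfolding NN_def by (intro null_sets_UN Bad_null) simp
  show "AE \<omega> in M. cadlag (\<lambda>t. X t \<omega>) \<longrightarrow> 0 < T k \<omega> \<longrightarrow>
    ((\<lambda>t. X t \<omega>) \<longlongrightarrow> X (T k \<omega>) \<omega>) (at_left (T k \<omega>))"
  proof (rule AE_I'[OF nn], rule subsetI)
    fix \<omega> assume "\<omega> \<in> {\<omega> \<in> space M. \<not> (cadlag (\<lambda>t. X t \<omega>) \<longrightarrow> 0 < T k \<omega> \<longrightarrow>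
    ((\<lambda>t. X t \<omega>) \<longlongrightarrow> X (T k \<omega>) \<omega>) (at_left (T k \<omega>)))}"
    then have "\<omega> \<in> space M" "cadlag (\<lambda>t. X t \<omega>)" "0 < T k \<omega>"
      "\<not> ((\<lambda>t. X t \<omega>) \<longlongrightarrow> X (T k \<omega>) \<omega>) (at_left (T k \<omega>))" by auto
    from jump_pw[OF this] show "\<omega> \<in> NN" unfolding NN_def by blast
  qed
qed

lemma AE_T0: "AE \<omega> in M. T 0 \<omega> = 0"
  using pois unfolding poisson_arrivals_def by (intro AE_I2) auto

lemma AE_gpath: "AE \<omega> in M. gpath (\<lambda>t. X t \<omega>) (\<lambda>k. T k \<omega>)"
  using AE_X0 AE_cadlag AE_Tinc AE_Tunb AE_jump AE_T0
proof eventually_elim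
  case (elim \<omega>)
  have sm: "strict_mono (\<lambda>k. T k \<omega>)" using elim(3) by (simp add: strict_mono_Suc_iff)
  have "0 < T k \<omega>" if "1 \<le> k" for k
    using strict_monoD[OF sm, of 0 k] that elim(6) by simp
  then show ?case unfolding gpath_def using elim sm by auto
qed

end

theorem mainTheorem4:
  fixes M :: "'w measure" and X :: "real \<Rightarrow> 'w \<Rightarrow> real" and T :: "nat \<Rightarrow> 'w \<Rightarrow> real"
    and r a x \<epsilon> :: real
  assumes "levy_process M X"
    and "r > 0" and "poisson_arrivals M r T"
    and "indep_processes M X T"
    and "a \<ge> 0" and "x \<ge> 0" and "\<epsilon> > 0"
  shows "AE \<omega> in M.
    (let Xp = (\<lambda>t. X t \<omega>); Tp = (\<lambda>k. T k \<omega>);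
         DL = (\<lambda>t. pc_L Xp Tp a (x + \<epsilon>) t - pc_L Xp Tp a x t);
         DR = (\<lambda>t. pc_R Xp Tp a (x + \<epsilon>) t - pc_R Xp Tp a x t)
     in
      (tau0 Xp x < Tplus Xp Tp a x \<longrightarrow>
         first_time (\<lambda>t. DR t < 0) \<ge> tau0 Xp x)
    \<and> (tau0 Xp (x + \<epsilon>) < Tplus Xp Tp a (x + \<epsilon>) \<longrightarrow>
         (\<forall>t\<ge>0. DL t = 0)
       \<and> (\<forall>t\<ge>0. ereal t < tau0 Xp x \<longrightarrow> DR t = 0)
       \<and> (\<forall>t\<ge>0. tau0 Xp (x + \<epsilon>) \<le> ereal t \<longrightarrow> DR t = - \<epsilon>))
    \<and> (Tplus Xp Tp a (x + \<epsilon>) < tau0 Xp (x + \<epsilon>) \<longrightarrow>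
         first_time (\<lambda>t. DL t > 0) \<ge> Tplus Xp Tp a (x + \<epsilon>))
    \<and> (Tplus Xp Tp a x < tau0 Xp x \<longrightarrow>
         (\<forall>t\<ge>0. ereal t < Tplus Xp Tp a (x + \<epsilon>) \<longrightarrow> DL t = 0)
       \<and> (\<forall>t\<ge>0. Tplus Xp Tp a x \<le> ereal t \<longrightarrow> DL t = \<epsilon>)
       \<and> (\<forall>t\<ge>0. DR t = 0)))"
  proof -
  interpret pset M X T r using assms by unfold_locales
  show ?thesis
    using AE_gpath
  proof eventually_elim
    case (elim \<omega>)
    interpret g: gpath "\<lambda>t. X t \<omega>" "\<lambda>k. T k \<omega>" by (rule elim)
    show ?case using g.det_main[OF assms(6,7), of a] by (simp only: Let_def)
  qed
qed

end
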